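(* Let $X$ be a real Hilbert space, $F:X\to\mathbb{R}^n$ a $C^2$ map satisfying Assumption (A), and assume there is $C>0$ with $|z^*\mathrm{d}^2F|_u(v,w)|\leq C\|v\|_X\|w\|_X$ for all $u\in X$, all unit $z\in\mathbb{R}^n$ and all $v,w\in X$. Let $\gamma:[0,1]\to\mathbb{R}^n$ be $C^2$, $u^0\notin\tilde S$ with $F(u^0)=\gamma(0)$, and let $u(\cdot)$ solve the PLE $\frac{\partial u}{\partial s}=\mathrm{d}F|_{u(s)}^*G(u(s))^{-1}\dot\gamma(s)$, $u(0)=u^0$, on $I=[0,\sigma_0)$, where $\sigma_0:=\sup\{\sigma\in[0,1):\lambda_1(s)>0\ \forall s\in[0,\sigma]\}$. Then $\lambda_1$ is differentiable on $I$, there exists $C_0\geq0$ with $\big|\frac{\mathrm{d}\lambda_1}{\mathrm{d}s}(s)\big|\leq C_0$ for all $s\in I$, and $$\frac{\mathrm{d}\sqrt{\lambda_1}}{\mathrm{d}s}(s)=\frac{a_1(s)}{\sqrt{\lambda_1(s)}}h(s)+f(s),\qquad s\in I,$$ where $$h(s):=z_1(s)^*\mathrm{d}^2F|_{u(s)}\big(v_1(s),v_1(s)\big),\qquad f(s):=\sum_{i=2}^n\frac{a_i(s)}{\sqrt{\lambda_i(s)}}\,z_1(s)^*\mathrm{d}^2F|_{u(s)}\big(v_i(s),v_1(s)\big).$$ Moreover $f$ and $\lambda_1$ are bounded on $I$.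
   Context: $X$ is a real Hilbert space identified with its dual; $\mathrm{d}F|_u^*$ is the adjoint of $\mathrm{d}F|_u$; $G(u):=\mathrm{d}F|_u\mathrm{d}F|_u^*$ with ordered eigenvalues $\lambda_1(u)\leq\cdots\leq\lambda_n(u)$; $\tilde S:=\{u:\det G(u)=0\}$. For $z\in\mathbb{R}^n$, $\phi_z(u):=\mathrm{d}F|_u^*z$ and $z^*\mathrm{d}^2F|_u$ is the bilinear form $(v,w)\mapsto\mathrm{d}\phi_z|_u(v)(w)=\langle z,\mathrm{d}^2F|_u(v,w)\rangle$. Assumption (A): there exists $\lambda_0>0$ with $\lambda_i(u)\geq\lambda_0$ for $i=2,\dots,n$ and all $u$. Along the solution, $\lambda_i(s):=\lambda_i(u(s))$; $z_1(s),\dots,z_n(s)$ are orthonormal unit eigenvectors of $G(u(s))$ for $\lambda_1(s),\dots,\lambda_n(s)$, chosen continuous in $s$ with $z_1$ differentiable on $I$; $a_i(s):=\langle\dot\gamma(s),z_i(s)\rangle$ (so $\dot\gamma=\sum_ia_iz_i$); and $v_i(s):=\mathrm{d}F|_{u(s)}^*z_i(s)/\sqrt{\lambda_i(s)}$ (unit vectors in $X$). *)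

theory Defs
  imports "HOL-Analysis.Analysis"
begin

definition Gop :: "('a::real_inner \<Rightarrow>\<^sub>L (real^'n)) \<Rightarrow> real^'n \<Rightarrow> real^'n" where
  "Gop L = (\<lambda>z. blinfun_apply L (adjoint (blinfun_apply L) z))"

definition ordered_eigs :: "(real^'n \<Rightarrow> real^'n) \<Rightarrow> (nat \<Rightarrow> real) \<Rightarrow> bool" where
  "ordered_eigs A lam \<longleftrightarrow>
     (\<forall>i j. 1 \<le> i \<longrightarrow> i \<le> j \<longrightarrow> j \<le> CARD('n) \<longrightarrow> lam i \<le> lam j) \<and>
     (\<forall>i. i \<notin> {1..CARD('n)} \<longrightarrow> lam i = 0) \<and>
     (\<exists>z::nat \<Rightarrow> real^'n.
        (\<forall>i\<in>{1..CARD('n)}. \<forall>j\<in>{1..CARD('n)}. z i \<bullet> z j = (if i = j then 1 else 0)) \<and>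
        (\<forall>i\<in>{1..CARD('n)}. A (z i) = lam i *\<^sub>R z i))"

definition eigval :: "(real^'n \<Rightarrow> real^'n) \<Rightarrow> nat \<Rightarrow> real" where
  "eigval A i = (THE lam. ordered_eigs A lam) i"

end

theory Submission
  imports Defs
begin


lemma parallelogram_aux:
  fixes a b :: "'a::real_inner"
  shows "norm (a - b)^2 + norm (a + b)^2 = 2 * norm a ^ 2 + 2 * norm b ^ 2"
  by (simp add: power2_norm_eq_inner inner_add_left inner_add_right inner_diff_left inner_diff_right inner_commute)

lemma riesz_functional:
  fixes phi :: "'a::{real_inner,complete_space} \<Rightarrow> real"
  assumes bl: "bounded_linear phi"
  shows "\<exists>w. \<forall>x. phi x = x \<bullet> w"
proof (cases "\<forall>x. phi x = 0")
  case True then show ?thesis by (intro exI[of _ 0]) simp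
next
  case False
  interpret phi: bounded_linear phi by fact
  obtain x1 where x1: "phi x1 \<noteq> 0" using False by blast
  define x0 where "x0 = (1 / phi x1) *\<^sub>R x1"
  have phx0: "phi x0 = 1" using x1 by (simp add: x0_def phi.scale)
  define K where "K = {k. phi k = 0}"
  have clK: "closed K" unfolding K_def
    by (intro closed_Collect_eq linear_continuous_on continuous_on_const bl)
  have K0: "0 \<in> K" by (simp add: K_def)
  have Kadd: "a + b \<in> K" if "a \<in> K" "b \<in> K" for a b using that by (simp add: K_def phi.add)
  have Kscale: "c *\<^sub>R a \<in> K" if "a \<in> K" for a c using that by (simp add: K_def phi.scale)
  define D where "D = (\<lambda>k. norm (x0 - k)^2) ` K"
  define d where "d = Inf D"
  have Dne: "D \<noteq> {}" using K0 by (auto simp: D_def)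
  have Dbdd: "bdd_below D" unfolding D_def by (rule bdd_belowI[of _ 0]) auto
  have dle: "d \<le> norm (x0 - k)^2" if "k \<in> K" for k
    unfolding d_def by (rule cInf_lower) (use that Dbdd in \<open>auto simp: D_def\<close>)
  have "\<exists>k\<in>K. norm (x0 - k)^2 < d + inverse (real (Suc m))" for m
  proof -
    have "Inf D < d + inverse (real (Suc m))" by (simp add: d_def)
    from cInf_lessD[OF Dne this] show ?thesis by (auto simp: D_def)
  qed
  then obtain ks where ksK: "\<And>m. ks m \<in> K" and ksd: "\<And>m. norm (x0 - ks m)^2 < d + inverse (real (Suc m))"
    by metis
  have cb: "norm (ks m - ks l)^2 \<le> 2 * inverse (real (Suc m)) + 2 * inverse (real (Suc l))" for m l
  proof -
    have mid: "(1/2) *\<^sub>R (ks m + ks l) \<in> K" using ksK Kadd Kscale by blast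
    have "norm ((x0 - ks m) + (x0 - ks l))^2 = 4 * norm (x0 - (1/2) *\<^sub>R (ks m + ks l))^2"
    proof -
      have "(x0 - ks m) + (x0 - ks l) = 2 *\<^sub>R (x0 - (1/2) *\<^sub>R (ks m + ks l))"
        by (simp add: algebra_simps scaleR_2)
      then show ?thesis by (simp add: power_mult_distrib)
    qed
    moreover have "d \<le> norm (x0 - (1/2) *\<^sub>R (ks m + ks l))^2" using dle[OF mid] .
    moreover have "norm ((x0 - ks m) - (x0 - ks l))^2 = norm (ks m - ks l)^2"
      by (metis norm_minus_commute diff_diff_eq2 add_diff_cancel_left' diff_add_cancel add.commute diff_diff_add)
    ultimately show ?thesis using parallelogram_aux[of "x0 - ks m" "x0 - ks l"] ksd[of m] ksd[of l]
      by linarith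
  qed
  have "Cauchy ks"
  proof (rule metric_CauchyI)
    fix e :: real assume e: "e > 0"
    obtain M where M: "inverse (real (Suc M)) < e^2 / 4"
      using reals_Archimedean[of "e^2/4"] e by auto
    show "\<exists>M. \<forall>m\<ge>M. \<forall>n\<ge>M. dist (ks m) (ks n) < e"
    proof (intro exI allI impI)
      fix m n assume mn: "M \<le> m" "M \<le> n"
      have i1: "inverse (real (Suc m)) \<le> inverse (real (Suc M))" "inverse (real (Suc n)) \<le> inverse (real (Suc M))"
        using mn by (auto simp: field_simps)
      have "dist (ks m) (ks n)^2 < e^2" using cb[of m n] M i1 unfolding dist_norm by linarith
      then show "dist (ks m) (ks n) < e" using e by (simp add: power_less_imp_less_base)
    qed
  qed
  then obtain k0 where k0: "ks \<longlonglongrightarrow> k0" using Cauchy_convergent_iff convergent_def by blast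
  have k0K: "k0 \<in> K" using closed_sequentially[OF clK] ksK k0 by blast
  define y where "y = x0 - k0"
  have ny: "norm y ^2 \<le> d"
  proof (rule LIMSEQ_le)
    show "(\<lambda>m. norm (x0 - ks m)^2) \<longlonglongrightarrow> norm y ^2" unfolding y_def
      by (intro tendsto_intros k0)
    show "(\<lambda>m. d + inverse (real (Suc m))) \<longlonglongrightarrow> d"
      using tendsto_add[OF tendsto_const LIMSEQ_inverse_real_of_nat] by simp
    show "\<exists>N. \<forall>n\<ge>N. norm (x0 - ks n)^2 \<le> d + inverse (real (Suc n))"
      using ksd less_imp_le by blast
  qed
  have orth: "y \<bullet> k = 0" if kK: "k \<in> K" for k
  proof (cases "k = 0")
    case True then show ?thesis by simp
  next
    case False
    define t where "t = (y \<bullet> k) / (k \<bullet> k)"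
    have kk: "k \<bullet> k > 0" using False by simp
    have "k0 + t *\<^sub>R k \<in> K" using k0K kK Kadd Kscale by blast
    then have "d \<le> norm (y - t *\<^sub>R k)^2" using dle by (simp add: y_def algebra_simps)
    also have "norm (y - t *\<^sub>R k)^2 = norm y ^2 - 2 * t * (y \<bullet> k) + t^2 * (k \<bullet> k)"
      unfolding power2_norm_eq_inner by (simp add: inner_diff_left inner_diff_right inner_commute power2_eq_square algebra_simps)
    also have "\<dots> = norm y ^2 - (y \<bullet> k)^2 / (k \<bullet> k)"
      using kk by (simp add: t_def field_simps power2_eq_square)
    finally have "(y \<bullet> k)^2 / (k \<bullet> k) \<le> 0" using ny by linarith
    then have "(y \<bullet> k)^2 \<le> 0" using kk by (simp add: divide_le_0_iff)
    then show ?thesis by simp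
  qed
  have phy: "phi y = 1" using k0K phx0 by (simp add: y_def K_def phi.diff)
  then have yy: "y \<bullet> y \<noteq> 0" by auto
  show ?thesis
  proof (intro exI allI)
    fix x
    have "x - phi x *\<^sub>R y \<in> K" using phy by (simp add: K_def phi.diff phi.scale)
    then have "(x - phi x *\<^sub>R y) \<bullet> y = 0" using orth by (metis inner_commute)
    then have "x \<bullet> y = phi x * (y \<bullet> y)" by (simp add: inner_diff_left)
    then show "phi x = x \<bullet> ((1 / (y \<bullet> y)) *\<^sub>R y)" using yy by (simp add: field_simps)
  qed
qed

lemma adjoint_exists:
  fixes L :: "'a::{real_inner,complete_space} \<Rightarrow> real^'n"
  assumes bl: "bounded_linear L"
  shows "\<exists>g. \<forall>x y. L x \<bullet> y = x \<bullet> g y"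
proof -
  have "\<forall>j. \<exists>w. \<forall>x. L x $ j = x \<bullet> w"
    using riesz_functional bounded_linear_compose[OF bounded_linear_vec_nth bl] by blast
  then obtain w where w: "\<And>j x. L x $ j = x \<bullet> w j" by metis
  show ?thesis
  proof (intro exI allI)
    fix x y
    show "L x \<bullet> y = x \<bullet> (\<Sum>j\<in>UNIV. (y $ j) *\<^sub>R w j)"
      by (simp add: inner_vec_def w inner_sum_right mult.commute)
  qed
qed

lemma adjoint_works_hilbert:
  fixes L :: "'a::{real_inner,complete_space} \<Rightarrow> real^'n"
  assumes bl: "bounded_linear L"
  shows "x \<bullet> adjoint L y = L x \<bullet> y"
proof -
  from adjoint_exists[OF bl] have "\<exists>g. \<forall>x y. L x \<bullet> y = x \<bullet> g y" .
  then have "\<forall>x y. L x \<bullet> y = x \<bullet> adjoint L y"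
    unfolding adjoint_def by (rule someI_ex)
  then show ?thesis by simp
qed

lemma blinfun_adjoint:
  fixes L :: "'a::{real_inner,complete_space} \<Rightarrow>\<^sub>L (real^'n)"
  shows "x \<bullet> adjoint (blinfun_apply L) y = blinfun_apply L x \<bullet> y"
  by (rule adjoint_works_hilbert) (rule blinfun.bounded_linear_right)

definition adjB :: "('a::{real_inner,complete_space} \<Rightarrow>\<^sub>L (real^'n)) \<Rightarrow> real^'n \<Rightarrow> 'a" where
  "adjB L y = adjoint (blinfun_apply L) y"

lemma adjB_eqI:
  fixes p q :: "'a::real_inner"
  shows "(\<And>x. x \<bullet> p = x \<bullet> q) \<Longrightarrow> p = q"
  using vector_eq_ldot by blast

lemma adjB_norm:
  fixes L :: "'a::{real_inner,complete_space} \<Rightarrow>\<^sub>L (real^'n)"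
  shows "norm (adjB L y) \<le> norm L * norm y"
proof (cases "adjB L y = 0")
  case True then show ?thesis by simp
next
  case False
  have "norm (adjB L y)^2 = blinfun_apply L (adjB L y) \<bullet> y"
    by (simp add: adjB_def blinfun_adjoint power2_norm_eq_inner)
  also have "\<dots> \<le> norm (blinfun_apply L (adjB L y)) * norm y" by (rule norm_cauchy_schwarz)
  also have "\<dots> \<le> norm L * norm (adjB L y) * norm y"
    by (intro mult_right_mono norm_blinfun) simp
  finally have "norm (adjB L y) * norm (adjB L y) \<le> (norm L * norm y) * norm (adjB L y)"
    by (simp add: power2_eq_square algebra_simps)
  then show ?thesis using False by simp
qed

lemma adjB_bilinear: "bounded_bilinear (adjB :: ('a::{real_inner,complete_space} \<Rightarrow>\<^sub>L (real^'n)) \<Rightarrow> real^'n \<Rightarrow> 'a)"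
proof
  fix a a' :: "'a \<Rightarrow>\<^sub>L (real^'n)" and b b' :: "real^'n" and r :: real
  show "adjB (a + a') b = adjB a b + adjB a' b"
    by (rule adjB_eqI) (simp add: adjB_def blinfun_adjoint inner_add_right blinfun.add_left inner_add_left)
  show "adjB a (b + b') = adjB a b + adjB a b'"
    by (rule adjB_eqI) (simp add: adjB_def blinfun_adjoint inner_add_right inner_add_left)
  show "adjB (r *\<^sub>R a) b = r *\<^sub>R adjB a b"
    by (rule adjB_eqI) (simp add: adjB_def blinfun_adjoint blinfun.scaleR_left)
  show "adjB a (r *\<^sub>R b) = r *\<^sub>R adjB a b"
    by (rule adjB_eqI) (simp add: adjB_def blinfun_adjoint)
  show "\<exists>K. \<forall>a b. norm (adjB a b) \<le> norm a * norm b * K"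
    by (intro exI[of _ 1] allI) (simp add: adjB_norm)
qed

lemma Gop_linear:
  fixes L :: "'a::{real_inner,complete_space} \<Rightarrow>\<^sub>L (real^'n)"
  shows "linear (Gop L)"
proof -
  have "bounded_linear (adjB L)" by (rule bounded_bilinear.bounded_linear_right[OF adjB_bilinear])
  then have "bounded_linear (\<lambda>z. blinfun_apply L (adjB L z))"
    by (rule bounded_linear_compose[OF blinfun.bounded_linear_right])
  then show ?thesis unfolding Gop_def adjB_def[symmetric] by (rule bounded_linear.linear)
qed

lemma Gop_inner:
  fixes L :: "'a::{real_inner,complete_space} \<Rightarrow>\<^sub>L (real^'n)"
  shows "y \<bullet> Gop L z = adjB L y \<bullet> adjB L z"
proof -
  have "y \<bullet> Gop L z = blinfun_apply L (adjB L z) \<bullet> y" by (simp add: Gop_def adjB_def inner_commute)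
  also have "\<dots> = adjB L z \<bullet> adjB L y" by (simp add: adjB_def blinfun_adjoint)
  finally show ?thesis by (simp add: inner_commute)
qed

lemma orthonormal_expand:
  fixes z :: "nat \<Rightarrow> real^'n"
  assumes orth: "\<And>i j. i \<in> {1..CARD('n)} \<Longrightarrow> j \<in> {1..CARD('n)} \<Longrightarrow> z i \<bullet> z j = (if i = j then 1 else 0)"
  shows "y = (\<Sum>i=1..CARD('n). (y \<bullet> z i) *\<^sub>R z i)"
proof -
  let ?Z = "z ` {1..CARD('n)}"
  have inj: "inj_on z {1..CARD('n)}"
    by (rule inj_onI) (metis orth zero_neq_one)
  have ind: "independent ?Z"
  proof (rule pairwise_orthogonal_independent)
    show "pairwise orthogonal ?Z"
      unfolding pairwise_def orthogonal_def using orth by auto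
    show "0 \<notin> ?Z" using orth by force
  qed
  have "card ?Z = CARD('n)" using card_image[OF inj] by simp
  then have "dim (UNIV :: (real^'n) set) \<le> card ?Z" by simp
  then have sp: "UNIV \<subseteq> span ?Z" using card_ge_dim_independent[OF subset_UNIV ind] by blast
  define r where "r = y - (\<Sum>i=1..CARD('n). (y \<bullet> z i) *\<^sub>R z i)"
  have rz: "r \<bullet> z j = 0" if j: "j \<in> {1..CARD('n)}" for j
  proof -
    have "(\<Sum>i=1..CARD('n). (y \<bullet> z i) *\<^sub>R z i) \<bullet> z j = (\<Sum>i=1..CARD('n). (y \<bullet> z i) * (z i \<bullet> z j))"
      by (simp add: inner_sum_left)
    also have "\<dots> = (\<Sum>i=1..CARD('n). if i = j then y \<bullet> z j else 0)"
      by (rule sum.cong) (use orth j in auto)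
    also have "\<dots> = y \<bullet> z j" using j by simp
    finally show ?thesis by (simp add: r_def inner_diff_left)
  qed
  have "orthogonal r r"
    by (rule orthogonal_to_span[of r ?Z]) (use sp rz in \<open>auto simp: orthogonal_def\<close>)
  then have "r = 0" by (simp add: orthogonal_def)
  then show ?thesis by (simp add: r_def)
qed

lemma matrix_inv_left_mult:
  fixes A :: "real^'n^'n"
  assumes "invertible A"
  shows "matrix_inv A ** A = mat 1"
  using assms unfolding invertible_def matrix_inv_def by (metis (mono_tags, lifting) someI_ex)



lemma main:
  fixes DF :: "'a::{real_inner,complete_space} \<Rightarrow> ('a \<Rightarrow>\<^sub>L (real^'n))"
    and D2F :: "'a \<Rightarrow> ('a \<Rightarrow>\<^sub>L ('a \<Rightarrow>\<^sub>L (real^'n)))"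
    and \<gamma>' \<gamma>'' :: "real \<Rightarrow> real^'n"
    and u :: "real \<Rightarrow> 'a" and u0 :: 'a
    and z :: "nat \<Rightarrow> real \<Rightarrow> real^'n"
    and C :: real
    and S I :: "real set"
    and lam a :: "nat \<Rightarrow> real \<Rightarrow> real" and v :: "nat \<Rightarrow> real \<Rightarrow> 'a" and h f :: "real \<Rightarrow> real"
  assumes S_def: "S = {\<sigma>. \<sigma> \<in> {0..<1} \<and> (\<forall>t\<in>{0..\<sigma>}. eigval (Gop (DF (u t))) 1 > 0)}"
    and I_def: "I = {0..<Sup S}"
    and lam_def: "lam = (\<lambda>i s. eigval (Gop (DF (u s))) i)"
    and a_def: "a = (\<lambda>i s. \<gamma>' s \<bullet> z i s)"
    and v_def: "v = (\<lambda>i s. (1 / sqrt (lam i s)) *\<^sub>R adjoint (blinfun_apply (DF (u s))) (z i s))"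
    and h_def: "h = (\<lambda>s. z 1 s \<bullet> blinfun_apply (blinfun_apply (D2F (u s)) (v 1 s)) (v 1 s))"
    and f_def: "f = (\<lambda>s. \<Sum>i = 2..CARD('n). a i s / sqrt (lam i s) *
                        (z 1 s \<bullet> blinfun_apply (blinfun_apply (D2F (u s)) (v i s)) (v 1 s)))"
    and DF_deriv: "\<And>x. (DF has_derivative blinfun_apply (D2F x)) (at x)"
    and assmA: "\<exists>lam0>0. \<forall>x. \<forall>i\<in>{2..CARD('n)}. eigval (Gop (DF x)) i \<ge> lam0"
    and C_pos: "C > 0"
    and D2F_bound: "\<And>x w v y. norm w = 1 \<Longrightarrow>
        \<bar>w \<bullet> blinfun_apply (blinfun_apply (D2F x) v) y\<bar> \<le> C * norm v * norm y"
    and gamma_d2: "\<And>t. t \<in> {0..1} \<Longrightarrow> (\<gamma>' has_vector_derivative \<gamma>'' t) (at t within {0..1})"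
    and u0_reg: "det (matrix (Gop (DF u0))) \<noteq> 0"
    and u_init: "u 0 = u0"
    and u_PLE: "\<And>s. s \<in> I \<Longrightarrow>
        (u has_vector_derivative
           adjoint (blinfun_apply (DF (u s))) (matrix_inv (matrix (Gop (DF (u s)))) *v \<gamma>' s))
        (at s within I)"
    and z_orth: "\<And>s i j. s \<in> I \<Longrightarrow>
        i \<in> {1..CARD('n)} \<Longrightarrow> j \<in> {1..CARD('n)} \<Longrightarrow> z i s \<bullet> z j s = (if i = j then 1 else 0)"
    and z_eig: "\<And>s i. s \<in> I \<Longrightarrow>
        i \<in> {1..CARD('n)} \<Longrightarrow> Gop (DF (u s)) (z i s) = eigval (Gop (DF (u s))) i *\<^sub>R z i s"
    and z1_diff: "\<And>s. s \<in> I \<Longrightarrow> z 1 differentiable (at s within I)"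
  shows "(\<exists>D. (\<forall>s\<in>I. (lam 1 has_real_derivative D s) (at s within I)) \<and>
                 (\<exists>C0\<ge>0. \<forall>s\<in>I. \<bar>D s\<bar> \<le> C0)) \<and>
            (\<forall>s\<in>I. ((\<lambda>t. sqrt (lam 1 t)) has_real_derivative
                        (a 1 s / sqrt (lam 1 s) * h s + f s)) (at s within I)) \<and>
            bounded (f ` I) \<and> bounded (lam 1 ` I)"
proof -
  let ?n = "CARD('n)"
  have n1: "1 \<in> {1..?n}" using zero_less_card_finite[where 'a='n] by simp
  obtain lam0 where lam0: "lam0 > 0" and lam0le: "\<And>x i. i \<in> {2..?n} \<Longrightarrow> eigval (Gop (DF x)) i \<ge> lam0"
    using assmA by blast
  have eig: "Gop (DF (u s)) (z i s) = lam i s *\<^sub>R z i s" if "s \<in> I" "i \<in> {1..?n}" for s i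
    using z_eig[OF that] by (simp add: lam_def)
  have zz: "z i s \<bullet> z i s = 1" if "s \<in> I" "i \<in> {1..?n}" for s i
    using z_orth[OF that that(2)] by simp
  have zn: "norm (z i s) = 1" if "s \<in> I" "i \<in> {1..?n}" for s i
    using zz[OF that] by (simp add: norm_eq_sqrt_inner)
  have nadj: "adjB (DF (u s)) (z i s) \<bullet> adjB (DF (u s)) (z i s) = lam i s" if "s \<in> I" "i \<in> {1..?n}" for s i
    using Gop_inner[of "z i s" "DF (u s)" "z i s"] eig[OF that] zz[OF that] by simp
  have Sne: "S \<noteq> {}" if "s \<in> I" for s
  proof -
    have "0 \<in> I" using that by (auto simp: I_def)
    let ?w = "z 1 0"
    have G0: "Gop (DF u0) ?w = lam 1 0 *\<^sub>R ?w" using eig[OF \<open>0 \<in> I\<close> n1] u_init by simp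
    have l0: "lam 1 0 \<ge> 0" using nadj[OF \<open>0 \<in> I\<close> n1] by (metis inner_ge_zero)
    have "lam 1 0 \<noteq> 0"
    proof
      assume "lam 1 0 = 0"
      then have "matrix (Gop (DF u0)) *v ?w = 0" using G0 Gop_linear[of "DF u0"] by simp
      moreover have "inj ((*v) (matrix (Gop (DF u0))))"
        using u0_reg inj_matrix_vector_mult invertible_det_nz by blast
      ultimately have "?w = 0" by (metis injD matrix_vector_mult_0_right)
      then show False using zz[OF \<open>0 \<in> I\<close> n1] by simp
    qed
    with l0 have "lam 1 0 > 0" by simp
    then have "0 \<in> S" by (simp add: S_def lam_def)
    then show ?thesis by blast
  qed
  have Sbdd: "bdd_above S" by (rule bdd_aboveI[of _ 1]) (auto simp: S_def)
  have I01: "0 \<le> s \<and> s < 1" if "s \<in> I" for s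
  proof -
    have "Sup S \<le> 1" using Sne[OF that] by (intro cSup_least) (auto simp: S_def)
    then show ?thesis using that by (auto simp: I_def)
  qed
  have lam1pos: "lam 1 s > 0" if "s \<in> I" for s
  proof -
    have "s < Sup S" using that by (simp add: I_def)
    from less_cSupD[OF Sne[OF that] this] obtain \<sigma> where "\<sigma> \<in> S" "s < \<sigma>" by blast
    then show ?thesis using that by (auto simp: S_def lam_def I_def)
  qed
  have lampos: "lam i s > 0" if "s \<in> I" "i \<in> {1..?n}" for s i
  proof (cases "i = 1")
    case True then show ?thesis using lam1pos[OF that(1)] by simp
  next
    case False
    then have "i \<in> {2..?n}" using that(2) by auto
    then show ?thesis using lam0le[of i "u s"] lam0 by (simp add: lam_def)
  qed
  have lamge: "lam i s \<ge> lam0" if "i \<in> {2..?n}" for s i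
    using lam0le[OF that] by (simp add: lam_def)
  have vdef: "v i s = (1 / sqrt (lam i s)) *\<^sub>R adjB (DF (u s)) (z i s)" for i s
    by (simp add: v_def adjB_def)
  have adjv: "adjB (DF (u s)) (z i s) = sqrt (lam i s) *\<^sub>R v i s" if "s \<in> I" "i \<in> {1..?n}" for s i
    using lampos[OF that] by (simp add: vdef)
  have vn: "norm (v i s) = 1" if "s \<in> I" "i \<in> {1..?n}" for s i
  proof -
    have "v i s \<bullet> v i s = (1 / lam i s) * (adjB (DF (u s)) (z i s) \<bullet> adjB (DF (u s)) (z i s))"
      using lampos[OF that] by (simp add: vdef)
    also have "\<dots> = 1" using nadj[OF that] lampos[OF that] by simp
    finally show ?thesis by (simp add: norm_eq_sqrt_inner)
  qed
  have Bz: "\<bar>z 1 s \<bullet> blinfun_apply (blinfun_apply (D2F x) (v i s)) (v 1 s)\<bar> \<le> C"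
    if "s \<in> I" "i \<in> {1..?n}" for s i x
    using D2F_bound[OF zn[OF that(1) n1], of x "v i s" "v 1 s"] vn[OF that] vn[OF that(1) n1] by simp
  have "continuous_on {0..1} \<gamma>'" using gamma_d2 by (rule continuous_on_vector_derivative)
  then have "compact (\<gamma>' ` {0..1})" by (intro compact_continuous_image) auto
  then have "bounded (\<gamma>' ` {0..1})" by (rule compact_imp_bounded)
  then obtain Gm where "\<forall>x\<in>\<gamma>' ` {0..1}. norm x \<le> Gm" unfolding bounded_iff by blast
  then have Gm: "\<And>t. t \<in> {0..1} \<Longrightarrow> norm (\<gamma>' t) \<le> Gm" by blast
  have aB: "\<bar>a i s\<bar> \<le> Gm" if "s \<in> I" "i \<in> {1..?n}" for s i
  proof -
    have "\<bar>a i s\<bar> \<le> norm (\<gamma>' s) * norm (z i s)" unfolding a_def by (simp add: Cauchy_Schwarz_ineq2)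
    also have "\<dots> \<le> Gm" using zn[OF that] Gm[of s] I01[OF that(1)] by simp
    finally show ?thesis .
  qed
  have "norm (\<gamma>' 0) \<le> Gm" by (rule Gm) simp
  then have Gm0: "0 \<le> Gm" by (metis norm_ge_zero order_trans)

  define D where "D s = 2 * (a 1 s * h s + sqrt (lam 1 s) * f s)" for s
  have expand: "adjoint (blinfun_apply (DF (u s))) (matrix_inv (matrix (Gop (DF (u s)))) *v \<gamma>' s)
      = (\<Sum>i=1..?n. (a i s / sqrt (lam i s)) *\<^sub>R v i s)" if s: "s \<in> I" for s
  proof -
    let ?G = "Gop (DF (u s))"
    let ?M = "matrix ?G"
    have lin: "linear ?G" by (rule Gop_linear)
    have Mv: "?M *v x = ?G x" for x using fun_cong[OF matrix_vector_mul(2)[OF lin]] by simp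
    have ex: "y = (\<Sum>i=1..?n. (y \<bullet> z i s) *\<^sub>R z i s)" for y
      by (rule orthonormal_expand) (use z_orth[OF s] in auto)
    have Gsum: "?G (\<Sum>i=1..?n. (y \<bullet> z i s / lam i s) *\<^sub>R z i s) = y" for y
    proof -
      have "?G (\<Sum>i=1..?n. (y \<bullet> z i s / lam i s) *\<^sub>R z i s) = (\<Sum>i=1..?n. (y \<bullet> z i s / lam i s) *\<^sub>R ?G (z i s))"
        by (simp add: linear_sum[OF lin] linear_cmul[OF lin])
      also have "\<dots> = (\<Sum>i=1..?n. (y \<bullet> z i s) *\<^sub>R z i s)"
      proof (rule sum.cong[OF refl])
        fix i assume i: "i \<in> {1..?n}"
        show "(y \<bullet> z i s / lam i s) *\<^sub>R ?G (z i s) = (y \<bullet> z i s) *\<^sub>R z i s"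
          using eig[OF s i] lampos[OF s i] by simp
      qed
      finally show ?thesis using ex[of y] by simp
    qed
    define c where "c = (\<Sum>i=1..?n. (\<gamma>' s \<bullet> z i s / lam i s) *\<^sub>R z i s)"
    have Mc: "?M *v c = \<gamma>' s" using Gsum Mv c_def by simp
    have "surj ((*v) ?M)"
      by (rule surjI[of _ "\<lambda>y. \<Sum>i=1..?n. (y \<bullet> z i s / lam i s) *\<^sub>R z i s"]) (subst Mv, rule Gsum)
    then obtain B where B: "?M ** B = mat 1" using matrix_right_invertible_surjective by blast
    then have "B ** ?M = mat 1" using matrix_left_right_inverse by blast
    then have "invertible ?M" unfolding invertible_def using B by blast
    then have mi: "matrix_inv ?M *v \<gamma>' s = c" using Mc matrix_inv_left_mult
      by (metis matrix_vector_mul_assoc matrix_vector_mul_lid)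
    have "adjoint (blinfun_apply (DF (u s))) c = adjB (DF(u s)) c" by (simp add: adjB_def)
    also have "\<dots> = (\<Sum>i=1..?n. (\<gamma>' s \<bullet> z i s / lam i s) *\<^sub>R adjB (DF (u s)) (z i s))"
      by (simp add: c_def bounded_bilinear.sum_right[OF adjB_bilinear] bounded_bilinear.scaleR_right[OF adjB_bilinear])
    also have "\<dots> = (\<Sum>i=1..?n. (a i s / sqrt (lam i s)) *\<^sub>R v i s)"
    proof (rule sum.cong[OF refl])
      fix i assume i: "i \<in> {1..?n}"
      have l: "lam i s > 0" using lampos[OF s i] .
      have sq: "sqrt (lam i s) * sqrt (lam i s) = lam i s" using l by simp
      have sp: "sqrt (lam i s) > 0" using l by simp
      have "(\<gamma>' s \<bullet> z i s / lam i s) *\<^sub>R adjB (DF (u s)) (z i s) = (a i s / lam i s * sqrt (lam i s)) *\<^sub>R v i s"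
        using adjv[OF s i] by (simp add: a_def)
      also have "a i s / lam i s * sqrt (lam i s) = a i s / sqrt (lam i s)"
        using sp by (subst sq[symmetric]) (simp add: field_simps)
      finally show "(\<gamma>' s \<bullet> z i s / lam i s) *\<^sub>R adjB (DF (u s)) (z i s) = (a i s / sqrt (lam i s)) *\<^sub>R v i s" .
    qed
    finally show ?thesis using mi by simp
  qed
  have deriv: "(lam 1 has_real_derivative D s) (at s within I)" if s: "s \<in> I" for s
  proof -
    let ?ud = "\<Sum>i=1..?n. (a i s / sqrt (lam i s)) *\<^sub>R v i s"
    have ud: "(u has_vector_derivative ?ud) (at s within I)" using u_PLE[OF s] expand[OF s] by simp
    obtain z1' where z1d: "(z 1 has_vector_derivative z1') (at s within I)"
      using z1_diff[OF s] vector_derivative_works by blast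
    let ?B = "blinfun_apply (D2F (u s)) ?ud"
    have DFu: "((\<lambda>t. DF (u t)) has_vector_derivative ?B) (at s within I)"
    proof -
      have "(u has_derivative (\<lambda>t. t *\<^sub>R ?ud)) (at s within I)" using ud by (simp add: has_vector_derivative_def)
      moreover have "(DF has_derivative blinfun_apply (D2F (u s))) (at (u s) within u ` I)"
        using DF_deriv by (rule has_derivative_at_withinI)
      ultimately have "(DF \<circ> u has_derivative blinfun_apply (D2F (u s)) \<circ> (\<lambda>t. t *\<^sub>R ?ud)) (at s within I)"
        by (rule diff_chain_within)
      moreover have "blinfun_apply (D2F (u s)) \<circ> (\<lambda>t. t *\<^sub>R ?ud) = (\<lambda>t. t *\<^sub>R ?B)"
        by (rule ext) (simp add: blinfun.scaleR_right)
      ultimately show ?thesis by (simp add: has_vector_derivative_def comp_def)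
    qed
    let ?P = "\<lambda>t. adjB (DF (u t)) (z 1 t)"
    let ?P' = "adjB (DF (u s)) z1' + adjB ?B (z 1 s)"
    have Pd: "(?P has_vector_derivative ?P') (at s within I)"
      using bounded_bilinear.has_vector_derivative[OF adjB_bilinear DFu z1d] by simp
    have PPd: "((\<lambda>t. ?P t \<bullet> ?P t) has_vector_derivative (?P s \<bullet> ?P' + ?P' \<bullet> ?P s)) (at s within I)"
      using bounded_bilinear.has_vector_derivative[OF bounded_bilinear_inner Pd Pd] by simp
    have l1d: "(lam 1 has_vector_derivative (?P s \<bullet> ?P' + ?P' \<bullet> ?P s)) (at s within I)"
      by (rule has_vector_derivative_transform[OF s _ PPd]) (use nadj n1 in auto)
    have nb: "at s within I \<noteq> bot"
    proof -
      have s1: "s < Sup S" using s by (simp add: I_def)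
      define b where "b = (s + Sup S)/2"
      have sb: "s < b" using s1 by (simp add: b_def)
      have sub: "{s..b} \<subseteq> I" using s s1 by (auto simp: I_def b_def)
      have "at s within {s..b} \<noteq> bot" using at_within_Icc_at_right[OF sb] by simp
      then show ?thesis using at_le[OF sub, of s] by (metis bot.extremum_uniqueI)
    qed
    have z1z1': "z 1 s \<bullet> z1' = 0"
    proof -
      have d1: "((\<lambda>t. z 1 t \<bullet> z 1 t) has_vector_derivative (z 1 s \<bullet> z1' + z1' \<bullet> z 1 s)) (at s within I)"
        using bounded_bilinear.has_vector_derivative[OF bounded_bilinear_inner z1d z1d] by simp
      have d2: "((\<lambda>t. z 1 t \<bullet> z 1 t) has_vector_derivative 0) (at s within I)"
        by (rule has_vector_derivative_transform[OF s _ has_vector_derivative_const[of "1::real"]]) (use zz n1 in auto)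
      have "z 1 s \<bullet> z1' + z1' \<bullet> z 1 s = 0" using vector_derivative_unique_within[OF nb d1 d2] .
      then show ?thesis by (simp add: inner_commute)
    qed
    have t1: "?P s \<bullet> adjB (DF (u s)) z1' = 0"
    proof -
      have "?P s \<bullet> adjB (DF (u s)) z1' = blinfun_apply (DF (u s)) (?P s) \<bullet> z1'" by (simp add: adjB_def blinfun_adjoint)
      also have "blinfun_apply (DF (u s)) (?P s) = Gop (DF (u s)) (z 1 s)" by (simp add: Gop_def adjB_def)
      also have "\<dots> = lam 1 s *\<^sub>R z 1 s" by (rule eig[OF s n1])
      finally show ?thesis using z1z1' by simp
    qed
    have t2: "?P s \<bullet> adjB ?B (z 1 s) = z 1 s \<bullet> blinfun_apply ?B (?P s)"
      by (simp add: adjB_def blinfun_adjoint inner_commute)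
    have t3: "z 1 s \<bullet> blinfun_apply ?B (?P s) = a 1 s * h s + sqrt (lam 1 s) * f s"
    proof -
      let ?w = "\<lambda>i. a i s / sqrt (lam i s) * (z 1 s \<bullet> blinfun_apply (blinfun_apply (D2F (u s)) (v i s)) (v 1 s))"
      have "z 1 s \<bullet> blinfun_apply ?B (?P s) = z 1 s \<bullet> blinfun_apply ?B (sqrt (lam 1 s) *\<^sub>R v 1 s)"
        using adjv[OF s n1] by simp
      also have "\<dots> = sqrt (lam 1 s) * (\<Sum>i=1..?n. ?w i)"
        by (simp add: blinfun.sum_right blinfun.sum_left blinfun.scaleR_right blinfun.scaleR_left
            inner_sum_right sum_distrib_left algebra_simps)
      also have "(\<Sum>i=1..?n. ?w i) = ?w 1 + (\<Sum>i=2..?n. ?w i)"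
      proof -
        have e: "{2..?n} = {Suc 1..?n}" by simp
        show ?thesis unfolding e by (rule sum.atLeast_Suc_atMost) (use n1 in simp)
      qed
      also have "\<dots> = a 1 s / sqrt (lam 1 s) * h s + f s" by (simp add: h_def f_def)
      also have "sqrt (lam 1 s) * (a 1 s / sqrt (lam 1 s) * h s + f s) = a 1 s * h s + sqrt (lam 1 s) * f s"
        using lam1pos[OF s] by (simp add: field_simps)
      finally show ?thesis .
    qed
    have pp: "?P s \<bullet> ?P' = a 1 s * h s + sqrt (lam 1 s) * f s"
      using t1 t2 t3 by (simp add: inner_add_right)
    have e1: "?P' \<bullet> ?P s = ?P s \<bullet> ?P'" by (rule inner_commute)
    have "?P s \<bullet> ?P' + ?P' \<bullet> ?P s = D s"
      unfolding e1 pp D_def by simp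
    then show ?thesis using l1d by (simp add: has_real_derivative_iff_has_vector_derivative)
  qed
  have sqd: "((\<lambda>t. sqrt (lam 1 t)) has_real_derivative (a 1 s / sqrt (lam 1 s) * h s + f s)) (at s within I)"
    if s: "s \<in> I" for s
  proof -
    have d: "((\<lambda>t. sqrt (lam 1 t)) has_real_derivative inverse (sqrt (lam 1 s)) / 2 * D s) (at s within I)"
      by (rule DERIV_chain2[OF DERIV_real_sqrt[OF lam1pos[OF s]] deriv[OF s]])
    have eq: "inverse (sqrt (lam 1 s)) / 2 * D s = a 1 s / sqrt (lam 1 s) * h s + f s"
      using lam1pos[OF s] by (simp add: D_def field_simps)
    show ?thesis using d unfolding eq .
  qed

  define M where "M = real ?n * (Gm / sqrt lam0 * C)"
  have hB: "\<bar>h s\<bar> \<le> C" if s: "s \<in> I" for s using Bz[OF s n1, of "u s"] by (simp add: h_def)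
  have M0: "0 \<le> M" unfolding M_def using Gm0 lam0 C_pos by simp
  have fB: "\<bar>f s\<bar> \<le> M" if s: "s \<in> I" for s
  proof -
    let ?K = "Gm / sqrt lam0 * C"
    let ?t = "\<lambda>i. a i s / sqrt (lam i s) * (z 1 s \<bullet> blinfun_apply (blinfun_apply (D2F (u s)) (v i s)) (v 1 s))"
    have tb: "\<bar>?t i\<bar> \<le> ?K" if i: "i \<in> {2..?n}" for i
    proof -
      have i1: "i \<in> {1..?n}" using i by auto
      have sl: "sqrt lam0 \<le> sqrt (lam i s)" using lamge[OF i] by simp
      have sl0: "sqrt lam0 > 0" using lam0 by simp
      have f1: "\<bar>a i s\<bar> / sqrt (lam i s) \<le> Gm / sqrt lam0" by (rule frac_le[OF Gm0 aB[OF s i1] sl0 sl])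
      have f2: "\<bar>z 1 s \<bullet> blinfun_apply (blinfun_apply (D2F (u s)) (v i s)) (v 1 s)\<bar> \<le> C" by (rule Bz[OF s i1])
      have "\<bar>a i s\<bar> / sqrt (lam i s) * \<bar>z 1 s \<bullet> blinfun_apply (blinfun_apply (D2F (u s)) (v i s)) (v 1 s)\<bar> \<le> ?K"
        by (rule mult_mono[OF f1 f2]) (use Gm0 lam0 in auto)
      moreover have "\<bar>sqrt (lam i s)\<bar> = sqrt (lam i s)" using lampos[OF s i1] by simp
      ultimately show ?thesis by (simp add: abs_mult)
    qed
    have "\<bar>f s\<bar> \<le> (\<Sum>i=2..?n. \<bar>?t i\<bar>)" unfolding f_def by (rule sum_abs)
    also have "\<dots> \<le> real (card {2..?n}) * ?K" by (rule sum_bounded_above) (rule tb)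
    also have "\<dots> \<le> M" unfolding M_def by (intro mult_right_mono) (use Gm0 lam0 C_pos in auto)
    finally show ?thesis .
  qed
  define K where "K = Gm * C + M"
  have K0: "0 \<le> K" unfolding K_def using Gm0 C_pos M0 by simp
  define g where "g t = sqrt (1 + lam 1 t)" for t
  have gd: "(g has_real_derivative inverse (sqrt (1 + lam 1 s)) / 2 * D s) (at s within I)" if s: "s \<in> I" for s
  proof -
    have "((\<lambda>t. 1 + lam 1 t) has_real_derivative 0 + D s) (at s within I)"
      by (rule DERIV_add[OF DERIV_const deriv[OF s]])
    then have d1: "((\<lambda>t. 1 + lam 1 t) has_real_derivative D s) (at s within I)" by simp
    have "0 < 1 + lam 1 s" using lam1pos[OF s] by simp
    from DERIV_chain2[OF DERIV_real_sqrt[OF this] d1] show ?thesis unfolding g_def .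
  qed
  have DB0: "\<bar>D s\<bar> \<le> 2 * (Gm * C + sqrt (lam 1 s) * M)" if s: "s \<in> I" for s
  proof -
    have "\<bar>D s\<bar> = 2 * \<bar>a 1 s * h s + sqrt (lam 1 s) * f s\<bar>" unfolding D_def by (simp only: abs_mult)
    also have "\<bar>a 1 s * h s + sqrt (lam 1 s) * f s\<bar> \<le> \<bar>a 1 s\<bar> * \<bar>h s\<bar> + sqrt (lam 1 s) * \<bar>f s\<bar>"
      using abs_triangle_ineq[of "a 1 s * h s" "sqrt (lam 1 s) * f s"] lam1pos[OF s] by (simp add: abs_mult)
    also have "\<dots> \<le> Gm * C + sqrt (lam 1 s) * M"
      by (intro add_mono mult_mono mult_left_mono aB[OF s n1] hB[OF s] fB[OF s]) (use Gm0 lam1pos[OF s] in auto)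
    finally show ?thesis by simp
  qed
  have gB: "norm (inverse (sqrt (1 + lam 1 s)) / 2 * D s) \<le> K" if s: "s \<in> I" for s
  proof -
    let ?l = "lam 1 s"
    let ?q = "sqrt (1 + ?l)"
    have l: "?l > 0" by (rule lam1pos[OF s])
    have q1: "1 \<le> ?q" using l by simp
    have qs: "sqrt ?l \<le> ?q" using l by simp
    have qp: "?q > 0" using l by simp
    have "norm (inverse ?q / 2 * D s) = \<bar>D s\<bar> / 2 / ?q" using qp by (simp add: abs_mult field_simps)
    also have "\<dots> \<le> (Gm * C + sqrt ?l * M) / ?q" 
    proof -
      have "\<bar>D s\<bar> / 2 \<le> Gm * C + sqrt ?l * M" using DB0[OF s] by simp
      then show ?thesis by (rule divide_right_mono) (use qp in simp)
    qed
    also have "\<dots> = Gm * C / ?q + (sqrt ?l / ?q) * M" by (simp add: add_divide_distrib)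
    also have "\<dots> \<le> Gm * C + 1 * M"
    proof (intro add_mono mult_right_mono)
      show "Gm * C / ?q \<le> Gm * C" using divide_left_mono[OF q1, of "Gm * C"] qp Gm0 C_pos by simp
      show "sqrt ?l / ?q \<le> 1" using qs qp by simp
      show "0 \<le> M" by (rule M0)
    qed
    finally show ?thesis by (simp add: K_def)
  qed
  have gsB: "g s \<le> g 0 + K" if s: "s \<in> I" for s
  proof -
    have "0 \<in> I" using s by (auto simp: I_def)
    have cI: "convex I" unfolding I_def by (rule convex_real_interval)
    have "norm (g s - g 0) \<le> K * norm (s - 0)"
      by (rule field_differentiable_bound[OF cI gd gB s \<open>0 \<in> I\<close>])
    moreover have "norm (s - 0) \<le> 1" using I01[OF s] by simp
    ultimately have "norm (g s - g 0) \<le> K" using K0 by (metis mult_left_le order_trans)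
    then show ?thesis by simp
  qed
  have sqB: "sqrt (lam 1 s) \<le> g 0 + K" if s: "s \<in> I" for s
  proof -
    have "sqrt (lam 1 s) \<le> g s" unfolding g_def by simp
    then show ?thesis using gsB[OF s] by linarith
  qed
  have lamB: "lam 1 s \<le> (g 0 + K)^2" if s: "s \<in> I" for s
  proof -
    have "sqrt (lam 1 s) ^ 2 \<le> (g 0 + K)^2"
      by (rule power_mono[OF sqB[OF s]]) (use lam1pos[OF s] in simp)
    then show ?thesis using lam1pos[OF s] by simp
  qed
  show ?thesis
  proof (intro conjI)
    show "\<exists>D. (\<forall>s\<in>I. (lam 1 has_real_derivative D s) (at s within I)) \<and> (\<exists>C0\<ge>0. \<forall>s\<in>I. \<bar>D s\<bar> \<le> C0)"
    proof (intro exI conjI ballI)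
      show "(lam 1 has_real_derivative D s) (at s within I)" if "s \<in> I" for s using deriv[OF that] .
      show "0 \<le> 2 * (Gm * C + \<bar>g 0 + K\<bar> * M)" using Gm0 C_pos K0 M0 by simp
      show "\<bar>D s\<bar> \<le> 2 * (Gm * C + \<bar>g 0 + K\<bar> * M)" if s: "s \<in> I" for s
      proof -
        have "sqrt (lam 1 s) \<le> \<bar>g 0 + K\<bar>" using sqB[OF s] by linarith
        then have "sqrt (lam 1 s) * M \<le> \<bar>g 0 + K\<bar> * M" by (rule mult_right_mono[OF _ M0])
        then show ?thesis using DB0[OF s] by simp
      qed
    qed
    show "\<forall>s\<in>I. ((\<lambda>t. sqrt (lam 1 t)) has_real_derivative (a 1 s / sqrt (lam 1 s) * h s + f s)) (at s within I)"
      using sqd by blast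
    show "bounded (f ` I)" unfolding bounded_real using fB by blast
    show "bounded (lam 1 ` I)" unfolding bounded_real using lamB lam1pos
      by (metis (no_types, lifting) abs_of_pos image_iff)
  qed
qed



theorem proposition3p1:
  fixes F :: "'a::{real_inner,complete_space} \<Rightarrow> real^'n"
    and DF :: "'a \<Rightarrow> ('a \<Rightarrow>\<^sub>L (real^'n))"
    and D2F :: "'a \<Rightarrow> ('a \<Rightarrow>\<^sub>L ('a \<Rightarrow>\<^sub>L (real^'n)))"
    and \<gamma> \<gamma>' \<gamma>'' :: "real \<Rightarrow> real^'n"
    and u :: "real \<Rightarrow> 'a" and u0 :: 'a
    and z :: "nat \<Rightarrow> real \<Rightarrow> real^'n"
    and C :: real
  assumes F_deriv: "\<And>x. (F has_derivative blinfun_apply (DF x)) (at x)"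
    and DF_deriv: "\<And>x. (DF has_derivative blinfun_apply (D2F x)) (at x)"
    and D2F_cont: "continuous_on UNIV D2F"
    and assmA: "\<exists>lam0>0. \<forall>x. \<forall>i\<in>{2..CARD('n)}. eigval (Gop (DF x)) i \<ge> lam0"
    and C_pos: "C > 0"
    and D2F_bound: "\<And>x w v y. norm w = 1 \<Longrightarrow>
        \<bar>w \<bullet> blinfun_apply (blinfun_apply (D2F x) v) y\<bar> \<le> C * norm v * norm y"
    and gamma_d1: "\<And>t. t \<in> {0..1} \<Longrightarrow> (\<gamma> has_vector_derivative \<gamma>' t) (at t within {0..1})"
    and gamma_d2: "\<And>t. t \<in> {0..1} \<Longrightarrow> (\<gamma>' has_vector_derivative \<gamma>'' t) (at t within {0..1})"
    and gamma_C2: "continuous_on {0..1} \<gamma>''"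
    and u0_reg: "det (matrix (Gop (DF u0))) \<noteq> 0"
    and u0_F: "F u0 = \<gamma> 0"
    and u_init: "u 0 = u0"
    and u_PLE: "\<And>s. s \<in> {0..<Sup {\<sigma>. \<sigma> \<in> {0..<1} \<and> (\<forall>t\<in>{0..\<sigma>}. eigval (Gop (DF (u t))) 1 > 0)}} \<Longrightarrow>
        (u has_vector_derivative
           adjoint (blinfun_apply (DF (u s))) (matrix_inv (matrix (Gop (DF (u s)))) *v \<gamma>' s))
        (at s within {0..<Sup {\<sigma>. \<sigma> \<in> {0..<1} \<and> (\<forall>t\<in>{0..\<sigma>}. eigval (Gop (DF (u t))) 1 > 0)}})"
    and z_orth: "\<And>s i j. s \<in> {0..<Sup {\<sigma>. \<sigma> \<in> {0..<1} \<and> (\<forall>t\<in>{0..\<sigma>}. eigval (Gop (DF (u t))) 1 > 0)}} \<Longrightarrow>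
        i \<in> {1..CARD('n)} \<Longrightarrow> j \<in> {1..CARD('n)} \<Longrightarrow> z i s \<bullet> z j s = (if i = j then 1 else 0)"
    and z_eig: "\<And>s i. s \<in> {0..<Sup {\<sigma>. \<sigma> \<in> {0..<1} \<and> (\<forall>t\<in>{0..\<sigma>}. eigval (Gop (DF (u t))) 1 > 0)}} \<Longrightarrow>
        i \<in> {1..CARD('n)} \<Longrightarrow> Gop (DF (u s)) (z i s) = eigval (Gop (DF (u s))) i *\<^sub>R z i s"
    and z_cont: "\<And>i. i \<in> {1..CARD('n)} \<Longrightarrow>
        continuous_on {0..<Sup {\<sigma>. \<sigma> \<in> {0..<1} \<and> (\<forall>t\<in>{0..\<sigma>}. eigval (Gop (DF (u t))) 1 > 0)}} (z i)"
    and z1_diff: "\<And>s. s \<in> {0..<Sup {\<sigma>. \<sigma> \<in> {0..<1} \<and> (\<forall>t\<in>{0..\<sigma>}. eigval (Gop (DF (u t))) 1 > 0)}} \<Longrightarrow>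
        z 1 differentiable (at s within {0..<Sup {\<sigma>. \<sigma> \<in> {0..<1} \<and> (\<forall>t\<in>{0..\<sigma>}. eigval (Gop (DF (u t))) 1 > 0)}})"
  shows "let I = {0..<Sup {\<sigma>. \<sigma> \<in> {0..<1} \<and> (\<forall>t\<in>{0..\<sigma>}. eigval (Gop (DF (u t))) 1 > 0)}};
             lam = (\<lambda>i s. eigval (Gop (DF (u s))) i);
             a = (\<lambda>i s. \<gamma>' s \<bullet> z i s);
             v = (\<lambda>i s. (1 / sqrt (lam i s)) *\<^sub>R adjoint (blinfun_apply (DF (u s))) (z i s));
             h = (\<lambda>s. z 1 s \<bullet> blinfun_apply (blinfun_apply (D2F (u s)) (v 1 s)) (v 1 s));
             f = (\<lambda>s. \<Sum>i = 2..CARD('n). a i s / sqrt (lam i s) *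
                        (z 1 s \<bullet> blinfun_apply (blinfun_apply (D2F (u s)) (v i s)) (v 1 s)))
         in (\<exists>D. (\<forall>s\<in>I. (lam 1 has_real_derivative D s) (at s within I)) \<and>
                 (\<exists>C0\<ge>0. \<forall>s\<in>I. \<bar>D s\<bar> \<le> C0)) \<and>
            (\<forall>s\<in>I. ((\<lambda>t. sqrt (lam 1 t)) has_real_derivative
                        (a 1 s / sqrt (lam 1 s) * h s + f s)) (at s within I)) \<and>
            bounded (f ` I) \<and> bounded (lam 1 ` I)"
  unfolding Let_def
  by (rule main[OF refl refl refl refl refl refl refl DF_deriv assmA C_pos D2F_bound gamma_d2 u0_reg u_init
        u_PLE z_orth z_eig z1_diff])

end
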